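(* Let $f:[0,+\infty)\to[0,1]$ be defined by $f(u\tanh u)=u^{-1}\tanh u$ for $u>0$ and $f(0)=1$. Then for every fixed $\alpha>0$ the function $\phi(t)=t\,\alpha\, f(t/\alpha)$, $t>0$, is differentiable and monotone increasing, and $\phi(t)\to\alpha^2$ as $t\to+\infty$. *)

theory Defs
  imports Complex_Main
begin

text \<open>The function f on [0,+infinity) determined by f(u tanh u) = tanh u / u for u > 0
  and f 0 = 1 (u tanh u is a bijection of (0,+infinity) onto itself).
  Values at negative arguments are irrelevant and set to 0.\<close>
definition ftanh :: "real \<Rightarrow> real" where
  "ftanh x = (if x = 0 then 1
              else if x > 0 then (THE y. \<exists>u>0. u * tanh u = x \<and> y = tanh u / u)
              else 0)"

end

theory Submission
  imports Defs
begin

definition G :: "real \<Rightarrow> real" where "G u = u * tanh u"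

lemma G_strict: assumes "0 \<le> a" "a < b" shows "G a < G b"
proof -
  have "a * tanh a \<le> a * tanh b" using assms by (intro mult_left_mono) auto
  also have "\<dots> < b * tanh b" using assms by (intro mult_strict_right_mono) auto
  finally show ?thesis by (simp add: G_def)
qed

lemma G_inj: assumes "0 \<le> a" "0 \<le> b" "G a = G b" shows "a = b"
  using G_strict[of a b] G_strict[of b a] assms by (cases "a < b"; cases "b < a") auto

lemma G_cont: "isCont G x"
  unfolding G_def by (intro continuous_intros) auto

lemma G_deriv: "(G has_field_derivative (tanh u + u * (1 - tanh u ^ 2))) (at u)"
  unfolding G_def by (auto intro!: derivative_eq_intros)

lemma G_surj: assumes "0 < x" shows "\<exists>u>0. G u = x"
proof -
  define b where "b = x / tanh 1 + 1"
  have t1: "tanh (1::real) > 0" by simp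
  have b1: "b \<ge> 1" using assms t1 unfolding b_def by simp
  have "x \<le> b * tanh 1"
    using t1 by (simp add: b_def field_simps)
  also have "\<dots> \<le> b * tanh b" using b1 by (intro mult_left_mono) auto
  finally have "x \<le> G b" by (simp add: G_def)
  moreover have "G 0 \<le> x" using assms by (simp add: G_def)
  ultimately obtain u where u: "0 \<le> u" "u \<le> b" "G u = x"
    using IVT[of G 0 x b] b1 G_cont by auto
  then have "u \<noteq> 0" using assms by (auto simp: G_def)
  then show ?thesis using u by (intro exI[of _ u]) auto
qed

definition H :: "real \<Rightarrow> real" where "H x = (THE u. u > 0 \<and> G u = x)"

lemma H_props: assumes "0 < x" shows "H x > 0" "G (H x) = x"
proof -
  obtain u where u: "u > 0" "G u = x" using G_surj[OF assms] by auto
  have "H x = u" unfolding H_def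
    by (rule the_equality) (use u G_inj in auto)
  with u show "H x > 0" "G (H x) = x" by auto
qed

lemma H_G: assumes "0 < u" shows "H (G u) = u"
proof -
  have gp: "G u > 0" using assms by (simp add: G_def)
  show ?thesis using H_props[OF gp] G_inj[of "H (G u)" u] assms by auto
qed

lemma H_ge: assumes "0 < x" shows "x \<le> H x"
proof -
  have "x = H x * tanh (H x)" using H_props[OF assms] by (simp add: G_def)
  also have "\<dots> \<le> H x * 1" using H_props[OF assms] tanh_real_lt_1[of "H x"]
    by (intro mult_left_mono) auto
  finally show ?thesis by simp
qed

lemma H_mono: assumes "0 < x" "x \<le> y" shows "H x \<le> H y"
proof (rule ccontr)
  assume "\<not> H x \<le> H y"
  then have "G (H y) < G (H x)" using H_props[of y] assms by (intro G_strict) auto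
  then show False using H_props[of x] H_props[of y] assms by auto
qed

lemma ftanh_H: assumes "0 < x" shows "x * ftanh x = tanh (H x) ^ 2"
proof -
  have "ftanh x = tanh (H x) / H x"
    unfolding ftanh_def using assms
  proof (simp, intro the_equality)
    show "\<exists>u>0. u * tanh u = x \<and> tanh (H x) / H x = tanh u / u"
      using H_props[OF assms] by (auto simp: G_def)
  next
    fix y assume "\<exists>u>0. u * tanh u = x \<and> y = tanh u / u"
    then obtain u where "u > 0" "G u = x" "y = tanh u / u" by (auto simp: G_def)
    then show "y = tanh (H x) / H x" using H_G by auto
  qed
  then have "x * ftanh x = G (H x) * (tanh (H x) / H x)"
    using H_props[OF assms] by simp
  then show ?thesis using H_props[OF assms]
    by (simp add: G_def power2_eq_square)
qed

lemma H_cont: assumes "0 < x" shows "isCont H x"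
proof -
  have "isCont H (G (H x))"
  proof (rule isCont_inverse_function[where d = "H x / 2" and f = G and x = "H x"])
    show "0 < H x / 2" using H_props[OF assms] by simp
  next
    fix z assume "\<bar>z - H x\<bar> \<le> H x / 2"
    then have "z > 0" using abs_ge_minus_self[of "z - H x"] H_props(1)[OF assms] by linarith
    then show "H (G z) = z" by (rule H_G)
  qed (rule G_cont)
  then show ?thesis using H_props[OF assms] by simp
qed

lemma H_deriv: assumes "0 < x"
  shows "(H has_field_derivative inverse (tanh (H x) + H x * (1 - tanh (H x) ^ 2))) (at x)"
proof (rule DERIV_inverse_function[where a = 0 and b = "x + 1"])
  show "(G has_field_derivative (tanh (H x) + H x * (1 - tanh (H x) ^ 2))) (at (H x))"
    by (rule G_deriv)
  have p: "H x > 0" using H_props[OF assms] by auto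
  have "tanh (H x) ^ 2 < 1" using tanh_real_lt_1[of "H x"] p
    by (metis abs_of_pos less_eq_real_def power_less_one_iff tanh_real_nonneg_iff tanh_real_bounds
        greaterThanLessThan_iff power2_less_1_iff)
  then show "tanh (H x) + H x * (1 - tanh (H x) ^ 2) \<noteq> 0"
    using p by (smt (verit) mult_pos_pos tanh_real_pos_iff)
qed (use assms H_props H_cont in auto)

theorem proposition3p5:
  fixes \<alpha> :: real
  assumes "\<alpha> > 0"
  defines "\<phi> \<equiv> (\<lambda>t::real. t * \<alpha> * ftanh (t / \<alpha>))"
  shows "(\<forall>t>0. \<phi> differentiable (at t))
         \<and> mono_on {0<..} \<phi>
         \<and> (\<phi> \<longlongrightarrow> \<alpha>\<^sup>2) at_top"
proof -
  define \<psi> where "\<psi> = (\<lambda>t. \<alpha>^2 * tanh (H (t / \<alpha>)) ^ 2)"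
  have eq: "\<phi> t = \<psi> t" if "t > 0" for t
  proof -
    have "\<phi> t = \<alpha>^2 * ((t/\<alpha>) * ftanh (t/\<alpha>))"
      using assms by (simp add: \<phi>_def power2_eq_square field_simps)
    also have "\<dots> = \<psi> t" using ftanh_H[of "t/\<alpha>"] that assms by (simp add: \<psi>_def)
    finally show ?thesis .
  qed
  have D: "\<phi> differentiable (at t)" if "t > 0" for t
  proof -
    have tp: "t / \<alpha> > 0" using that assms by simp
    define D where "D = inverse (tanh (H (t/\<alpha>)) + H (t/\<alpha>) * (1 - tanh (H (t/\<alpha>)) ^ 2))"
    have hd: "((\<lambda>t. H (t/\<alpha>)) has_field_derivative D * (1/\<alpha>)) (at t)"
    proof -
      have dd: "((\<lambda>t. t/\<alpha>) has_field_derivative 1/\<alpha>) (at t)"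
        using assms by (auto intro!: derivative_eq_intros)
      show ?thesis
        using DERIV_chain2[where f=H and g="\<lambda>t. t/\<alpha>", OF H_deriv[OF tp, folded D_def] dd] .
    qed
    have ht: "((\<lambda>t. tanh (H (t/\<alpha>))) has_field_derivative (1 - tanh (H (t/\<alpha>))^2) * (D*(1/\<alpha>))) (at t)"
      using has_field_derivative_tanh[OF _ hd] by simp
    have hpsi: "(\<psi> has_field_derivative \<alpha>^2 * (of_nat 2 * ((1 - tanh (H (t/\<alpha>))^2) * (D*(1/\<alpha>)) * tanh (H (t/\<alpha>)) ^ (2 - Suc 0)))) (at t)"
      unfolding \<psi>_def by (rule DERIV_cmult[OF DERIV_power[OF ht]])
    have "(\<phi> has_field_derivative \<alpha>^2 * (of_nat 2 * ((1 - tanh (H (t/\<alpha>))^2) * (D*(1/\<alpha>)) * tanh (H (t/\<alpha>)) ^ (2 - Suc 0)))) (at t)"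
      by (rule has_field_derivative_transform_within_open[OF hpsi, where S = "{0<..}"])
         (use that eq in auto)
    then show ?thesis
      using real_differentiable_def by blast
  qed
  have M: "mono_on {0<..} \<phi>"
  proof (rule mono_onI)
    fix s t :: real assume st: "s \<in> {0<..}" "t \<in> {0<..}" "s \<le> t"
    have "H (s/\<alpha>) \<le> H (t/\<alpha>)" using st assms by (intro H_mono) (auto simp: divide_right_mono)
    then have "tanh (H (s/\<alpha>)) \<le> tanh (H (t/\<alpha>))" by simp
    moreover have "0 \<le> tanh (H (s/\<alpha>))" using H_props[of "s/\<alpha>"] st assms by simp
    ultimately have "tanh (H (s/\<alpha>))^2 \<le> tanh (H (t/\<alpha>))^2" by (intro power_mono) auto
    then show "\<phi> s \<le> \<phi> t" using eq st by (simp add: \<psi>_def mult_left_mono)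
  qed
  have L: "(\<phi> \<longlongrightarrow> \<alpha>\<^sup>2) at_top"
  proof -
    have lim1: "filterlim (\<lambda>t. t / \<alpha>) at_top at_top"
      using filterlim_at_top_mult_tendsto_pos[OF tendsto_const[of "1/\<alpha>"] _ filterlim_ident] assms
      by simp
    have "filterlim (\<lambda>t. H (t / \<alpha>)) at_top at_top"
    proof (rule filterlim_at_top_mono[OF lim1])
      show "\<forall>\<^sub>F t in at_top. t / \<alpha> \<le> H (t / \<alpha>)"
        using eventually_gt_at_top[of 0] by eventually_elim (use assms H_ge in auto)
    qed
    then have "((\<lambda>t. tanh (H (t / \<alpha>))) \<longlongrightarrow> 1) at_top"
      by (rule filterlim_compose[OF tanh_real_at_top])
    then have "(\<psi> \<longlongrightarrow> \<alpha>^2 * 1^2) at_top" unfolding \<psi>_def by (intro tendsto_intros)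
    then have "(\<psi> \<longlongrightarrow> \<alpha>^2) at_top" by simp
    then show ?thesis
      by (rule Lim_transform_eventually)
         (rule eventually_mono[OF eventually_gt_at_top[of "0::real"]], simp add: eq)
  qed
  show ?thesis using D M L by auto
qed

end
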